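(* Under the setting and assumptions described in the context (with $\sigma^2=s=1$, conditions A1' and C'', and $M=o(n^a)$ for some $a\in(0,1)$), writing $B_{*j}$ for the $j$-th column of $B_*$, $\Lambda_*=\mathrm{diag}(\lambda_{*1},\dots,\lambda_{*r})$, and $$\mathbf R_j=\sum_{1\le i\ne j\le r}\frac{1}{\lambda_{*i}-\lambda_{*j}}B_{*i}B_{*i}^T-\frac1{\lambda_{*j}}(I_M-B_*B_*^T),\qquad j=1,\dots,r,$$ we have $$H_B^{-1}(\theta_*;\theta_* )\big(\nabla_B\widetilde L_n(\theta_* )\big)=[\mathbf R_1\widetilde SB_{*1}:\cdots:\mathbf R_r\widetilde SB_{*r}].$$
   Context: Model: $Y_1,\dots,Y_n$ i.i.d. $N_m(0,\overline\Sigma)$ with $\overline\Sigma=\overline\Sigma_0+I_m$ ($\sigma^2=s=1$); $\overline\Sigma_0$ positive semidefinite with eigenvalues $\overline\lambda_1\ge\dots\ge\overline\lambda_m\ge0$; $r\ge1$ fixed. $\Phi$ known $M\times m$ with $\Phi\Phi^T=I_M$. $\mathcal S_{M,r}=\{B\in\mathbb R^{M\times r}:B^TB=I_r\}$. $\widetilde S=\frac1n\sum_i\Phi Y_iY_i^T\Phi^T$, $\Gamma(B,\Lambda)=B\Lambda B^T+I_M$, $\widetilde L_n(B,\Lambda)=\frac12\mathrm{tr}(\Gamma^{-1}\widetilde S)+\frac12\log|\Gamma|$. Condition A1': $\overline c_1\ge\overline\lambda_1>\dots>\overline\lambda_r>\overline\lambda_{r+1}$, $\max_{j\le r}(\overline\lambda_j-\overline\lambda_{j+1})^{-1}\le\overline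 c_2$. Condition C'': there is $(B_*,\Lambda_* )\in\mathcal S_{M,r}\times\mathbb R_+^r$ ($\Lambda_*$ diagonal) with $\|\overline\Sigma_0-\Phi^TB_*\Lambda_*B_*^T\Phi\|_F=O(\sqrt{M\log n/n})$. Let $\zeta=\log\Lambda$, $\theta_*=(B_*,\log\Lambda_* )$, $\Gamma_*=B_*\Lambda_*B_*^T+I_M$, $L(\theta;\theta_* )=\frac12\mathrm{tr}(\Gamma(\theta)^{-1}\Gamma_* )+\frac12\log|\Gamma(\theta)|$. Tangent space $\mathcal T_B=\{U:B^TU=-U^TB\}$ with canonical metric $\langle X,Y\rangle_c=\mathrm{tr}(X^T(I_M-\frac12BB^T)Y)$. For a smooth $f$ of $B$ with Euclidean gradient $f_B$ and Euclidean Hessian form $f_{BB}$: intrinsic gradient $\nabla_Bf=f_B-Bf_B^TB$; intrinsic Hessian $H(\Delta,X)=f_{BB}(\Delta,X)+\frac12\mathrm{tr}[(f_B^T\Delta B^T+B^T\Delta f_B^T)X]-\frac12\mathrm{tr}[(B^Tf_B+f_B^TB)\Delta^T(I_M-BB^T)X]$ for $\Delta,X\in\mathcal T_B$. $\nabla_B\widetilde L_n(\theta_* )$ is the intrinsic gradient of $B\mapsto\widetilde L_n(B,\Lambda_* )$ at $B_*$; $H_B(\theta_*;\theta_* )$ the intrinsic Hessian of $B\mapsto L((B,\log\Lambda_* );\theta_* )$ at $B_*$; $H_B^{-1}(\theta_*;\theta_* )(G)$ for $G\in\mathcal T_{B_*}$ is the $T\in\mathcal T_{B_*}$ with $H_B(\theta_*;\theta_*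 )(T,X)=\langle G,X\rangle_c$ for all $X\in\mathcal T_{B_*}$. *)

theory Defs
  imports "HOL-Analysis.Analysis"
begin

text \<open>Matrices are rendered as \<open>real^'c^'r\<close> (rows indexed by \<open>'r\<close>, columns by \<open>'c\<close>);
  the ambient dimension M is the finite type \<open>'M\<close>, the rank r the finite type \<open>'r\<close>,
  the data dimension m the finite type \<open>'m\<close>.  The inner product on \<open>real^'c^'r\<close>
  is the Frobenius inner product \<open>tr(X^T Y)\<close>.\<close>

definition diag_mat :: "real^'r \<Rightarrow> real^'r^'r" where
  "diag_mat v = (\<chi> i j. if i = j then v $ i else 0)"

definition stiefel :: "(real^'r^'M) set" where
  "stiefel = {B. transpose B ** B = mat 1}"

definition Gam :: "real^'r^'M \<Rightarrow> real^'r \<Rightarrow> real^'M^'M" where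
  "Gam B lam = B ** diag_mat lam ** transpose B + mat 1"

definition Stilde :: "nat \<Rightarrow> real^'m^'M \<Rightarrow> (nat \<Rightarrow> real^'m) \<Rightarrow> real^'M^'M" where
  "Stilde n Phi Y = (1 / real n) *\<^sub>R
     (\<Sum>i<n. (\<chi> a b. (Phi *v Y i) $ a * (Phi *v Y i) $ b))"

definition Ltilde :: "real^'M^'M \<Rightarrow> real^'r^'M \<Rightarrow> real^'r \<Rightarrow> real" where
  "Ltilde S B lam = 1/2 * trace (matrix_inv (Gam B lam) ** S) + 1/2 * ln (det (Gam B lam))"

definition Lpop :: "real^'M^'M \<Rightarrow> real^'r^'M \<Rightarrow> real^'r \<Rightarrow> real" where
  "Lpop Gs B lam = 1/2 * trace (matrix_inv (Gam B lam) ** Gs) + 1/2 * ln (det (Gam B lam))"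

definition egrad :: "(real^'r^'M \<Rightarrow> real) \<Rightarrow> real^'r^'M \<Rightarrow> real^'r^'M" where
  "egrad f B = (THE G. (f has_derivative (\<lambda>D. G \<bullet> D)) (at B))"

definition ehess :: "(real^'r^'M \<Rightarrow> real) \<Rightarrow> real^'r^'M \<Rightarrow> real^'r^'M \<Rightarrow> real^'r^'M \<Rightarrow> real" where
  "ehess f B Dl X = frechet_derivative (egrad f) (at B) Dl \<bullet> X"

definition tangent :: "real^'r^'M \<Rightarrow> (real^'r^'M) set" where
  "tangent B = {U. transpose B ** U = - (transpose U ** B)}"

definition canon :: "real^'r^'M \<Rightarrow> real^'r^'M \<Rightarrow> real^'r^'M \<Rightarrow> real" where
  "canon B X Y = trace (transpose X ** (mat 1 - (1/2) *\<^sub>R (B ** transpose B)) ** Y)"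

definition igrad :: "(real^'r^'M \<Rightarrow> real) \<Rightarrow> real^'r^'M \<Rightarrow> real^'r^'M" where
  "igrad f B = egrad f B - B ** transpose (egrad f B) ** B"

definition ihess :: "(real^'r^'M \<Rightarrow> real) \<Rightarrow> real^'r^'M \<Rightarrow> real^'r^'M \<Rightarrow> real^'r^'M \<Rightarrow> real" where
  "ihess f B Dl X =
     ehess f B Dl X
     + 1/2 * trace ((transpose (egrad f B) ** Dl ** transpose B
                      + transpose B ** Dl ** transpose (egrad f B)) ** X)
     - 1/2 * trace ((transpose B ** egrad f B + transpose (egrad f B) ** B)
                      ** transpose Dl ** (mat 1 - B ** transpose B) ** X)"

definition ihess_inv :: "(real^'r^'M \<Rightarrow> real) \<Rightarrow> real^'r^'M \<Rightarrow> real^'r^'M \<Rightarrow> real^'r^'M" where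
  "ihess_inv f B G = (THE T. T \<in> tangent B \<and> (\<forall>X \<in> tangent B. ihess f B T X = canon B G X))"

definition Rmat :: "real^'r^'M \<Rightarrow> real^'r \<Rightarrow> 'r \<Rightarrow> real^'M^'M" where
  "Rmat B lam j =
     (\<Sum>i\<in>UNIV - {j}. (1 / (lam $ i - lam $ j)) *\<^sub>R (\<chi> a b. B $ a $ i * B $ b $ i))
     - (1 / lam $ j) *\<^sub>R (mat 1 - B ** transpose B)"

end

theory Submission
  imports Defs
begin

lemma mm_bilinear: "bilinear ((**) :: real^'n^'m \<Rightarrow> real^'p^'n \<Rightarrow> real^'p^'m)"
  unfolding bilinear_def
  by (auto simp: linear_iff vec_eq_iff
      matrix_matrix_mult_def sum.distrib distrib_right distrib_left sum_distrib_left mult_ac)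

lemma mm_bb: "bounded_bilinear ((**) :: real^'n^'m \<Rightarrow> real^'p^'n \<Rightarrow> real^'p^'m)"
  using mm_bilinear bilinear_conv_bounded_bilinear by blast

lemma transpose_add: "transpose (A + B) = transpose A + transpose (B::real^'n^'m)"
  by (simp add: transpose_def vec_eq_iff)
lemma transpose_diff: "transpose (A - B) = transpose A - transpose (B::real^'n^'m)"
  by (simp add: transpose_def vec_eq_iff)
lemma transpose_neg: "transpose (- A) = - transpose (A::real^'n^'m)"
  by (simp add: transpose_def vec_eq_iff)
lemma transpose_zero[simp]: "transpose (0::real^'n^'m) = 0"
  by (simp add: transpose_def vec_eq_iff)

lemma transpose_bl: "bounded_linear (transpose :: real^'n^'m \<Rightarrow> real^'m^'n)"
proof -
  have "linear (transpose :: real^'n^'m \<Rightarrow> real^'m^'n)"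
    by (rule linearI) (simp_all add: transpose_add transpose_scalar)
  then show ?thesis by (simp add: linear_conv_bounded_linear)
qed

lemma trace_scaleR: "trace (c *\<^sub>R (A::real^'n^'n)) = c * trace A"
  by (simp add: trace_def sum_distrib_left)

lemma trace_bl: "bounded_linear (trace :: real^'n^'n \<Rightarrow> real)"
proof -
  have "linear (trace :: real^'n^'n \<Rightarrow> real)"
    by (rule linearI) (simp_all add: trace_add trace_scaleR)
  then show ?thesis by (simp add: linear_conv_bounded_linear)
qed

lemma trace_transpose: "trace (transpose (A::real^'n^'n)) = trace A"
  by (simp add: trace_def transpose_def)

lemma inner_trace: "(A::real^'c^'r) \<bullet> B = trace (transpose A ** B)"
  unfolding inner_vec_def trace_def transpose_def matrix_matrix_mult_def
  apply simp
  apply (rule sum.swap)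
  done

lemma matrix_add_rdistrib: "((B + C) ** A) = (B ** A) + (C ** (A::real^'p^'n))"
  for B C :: "real^'n^'m"
  by (simp add: matrix_matrix_mult_def vec_eq_iff sum.distrib distrib_right)
lemma matrix_diff_rdistrib: "((B - C) ** A) = (B ** A) - (C ** (A::real^'p^'n))"
  for B C :: "real^'n^'m"
  by (simp add: matrix_matrix_mult_def vec_eq_iff sum_subtractf left_diff_distrib)
lemma matrix_diff_ldistrib: "(A ** (B - C)) = (A ** B) - (A ** (C::real^'p^'n))"
  for A :: "real^'n^'m"
  by (simp add: matrix_matrix_mult_def vec_eq_iff sum_subtractf right_diff_distrib)
lemma matrix_neg_left: "(- B) ** A = - (B ** (A::real^'p^'n))"
  for B :: "real^'n^'m"
  by (simp add: matrix_matrix_mult_def vec_eq_iff sum_negf)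
lemma matrix_neg_right: "A ** (- B) = - (A ** (B::real^'p^'n))"
  for A :: "real^'n^'m"
  by (simp add: matrix_matrix_mult_def vec_eq_iff sum_negf)


lemma bb_deriv_zero:
  fixes u :: "'a::real_normed_vector \<Rightarrow> 'b::real_normed_vector"
    and v :: "'a \<Rightarrow> 'c::real_normed_vector" and prod :: "'b \<Rightarrow> 'c \<Rightarrow> 'd::real_normed_vector"
  assumes bb: "bounded_bilinear prod"
    and u: "(u \<longlongrightarrow> u x) (at x)"
    and v: "(v has_derivative v') (at x)" and v0: "v x = 0"
  shows "((\<lambda>y. prod (u y) (v y)) has_derivative (\<lambda>h. prod (u x) (v' h))) (at x)"
proof -
  interpret bounded_bilinear prod by (rule bb)
  from bounded_linear.bounded [OF has_derivative_bounded_linear [OF v]]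
  obtain KV where norm_V: "\<And>x. norm (v' x) \<le> norm x * KV" by fast
  from pos_bounded obtain K
    where K: "0 < K" and norm_prod: "\<And>a b. norm (prod a b) \<le> norm a * norm b * K"
    by fast
  define Nv where "Nv = (\<lambda>y. norm (v y - v x - v' (y - x)) / norm (y - x))"
  let ?H = "\<lambda>y. norm (u y) * Nv y * K + norm (u y - u x) * KV * K"
  show ?thesis
  proof (rule has_derivativeI_sandwich[of 1 _ _ _ _ ?H])
    show "bounded_linear (\<lambda>h. prod (u x) (v' h))"
      by (intro bounded_linear_compose [OF bounded_linear_right] has_derivative_bounded_linear [OF v])
  next
    have "(Nv \<longlongrightarrow> 0) (at x)"
      using v by (simp add: has_derivative_iff_norm Nv_def)
    moreover have "((\<lambda>y. u y - u x) \<longlongrightarrow> 0) (at x)" using u by (simp add: LIM_zero)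
    ultimately have "(?H \<longlongrightarrow> norm (u x) * 0 * K + norm (0::'b) * KV * K) (at x)"
      using u by (intro tendsto_intros) 
    then show "(?H \<longlongrightarrow> 0) (at x)" by simp
  next
    fix y assume "y \<in> UNIV" "y \<noteq> x" "dist y x < 1"
    have eq: "prod (u y) (v y) - prod (u x) (v x) - prod (u x) (v' (y - x))
        = prod (u y) (v y - v x - v' (y - x)) + prod (u y - u x) (v' (y - x))"
      using v0 by (simp add: diff_left diff_right add_left add_right zero_right)
    have "norm (prod (u y) (v y) - prod (u x) (v x) - prod (u x) (v' (y - x)))
        \<le> norm (u y) * norm (v y - v x - v' (y - x)) * K + norm (u y - u x) * (norm (y - x) * KV) * K"
      unfolding eq
      apply (rule order_trans[OF norm_triangle_ineq add_mono])
       apply (rule norm_prod)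
      apply (rule order_trans[OF norm_prod])
      apply (intro mult_right_mono mult_left_mono norm_V)
      using K by auto
    moreover have "norm (y - x) > 0" using \<open>y \<noteq> x\<close> by simp
    ultimately show "norm (prod (u y) (v y) - prod (u x) (v x) - prod (u x) (v' (y - x))) / norm (y - x) \<le> ?H y"
      by (simp add: Nv_def field_simps)
  qed simp
qed


lemma inv_deriv:
  fixes F G :: "'a::real_normed_vector \<Rightarrow> real^'n^'n"
  assumes F: "(F has_derivative F') (at x)"
    and r: "\<And>y. F y ** G y = mat 1" and l: "\<And>y. G y ** F y = mat 1"
    and bnd: "\<And>y. norm (G y) \<le> C"
  shows "(G has_derivative (\<lambda>h. - (G x ** F' h ** G x))) (at x)"
proof -
  interpret bb: bounded_bilinear "(**) :: real^'n^'n \<Rightarrow> real^'n^'n \<Rightarrow> real^'n^'n" by (rule mm_bb)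
  obtain K where K: "0 < K" and norm_prod: "\<And>(a::real^'n^'n) (b::real^'n^'n). norm (a ** b) \<le> norm a * norm b * K"
    using bb.pos_bounded by fast
  define v where "v = (\<lambda>y. (F x - F y) ** G x)"
  have key: "G y - G x = G y ** v y" for y
  proof -
    have "G y ** v y = G y ** (F x ** G x) - (G y ** F y) ** G x"
      unfolding v_def by (simp add: matrix_diff_rdistrib matrix_diff_ldistrib matrix_mul_assoc)
    also have "\<dots> = G y - G x" by (simp add: r l)
    finally show ?thesis by simp
  qed
  have Fc: "(F \<longlongrightarrow> F x) (at x)"
    using has_derivative_continuous[OF F] by (simp add: isCont_def)
  have vlim: "(v \<longlongrightarrow> 0) (at x)"
  proof -
    have "((\<lambda>y. (F x - F y) ** G x) \<longlongrightarrow> (F x - F x) ** G x) (at x)"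
      by (rule bb.tendsto[OF tendsto_diff[OF tendsto_const Fc] tendsto_const])
    then show ?thesis by (simp add: v_def)
  qed
  have Gc: "(G \<longlongrightarrow> G x) (at x)"
  proof -
    have "((\<lambda>y. G y - G x) \<longlongrightarrow> 0) (at x)"
    proof (rule Lim_null_comparison)
      show "\<forall>\<^sub>F y in at x. norm (G y - G x) \<le> C * norm (v y) * K"
        unfolding key
        using K by (intro always_eventually allI order_trans[OF norm_prod] mult_right_mono mult_left_mono bnd) auto
      have "((\<lambda>y. C * norm (v y) * K) \<longlongrightarrow> C * norm (0::real^'n^'n) * K) (at x)"
        by (intro tendsto_mult tendsto_const tendsto_norm vlim)
      then show "((\<lambda>y. C * norm (v y) * K) \<longlongrightarrow> 0) (at x)" by simp
    qed
    then show ?thesis by (simp add: LIM_zero_iff)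
  qed
  have vd: "(v has_derivative (\<lambda>h. (0 - F' h) ** G x)) (at x)"
    unfolding v_def
    by (rule bounded_linear.has_derivative[OF bb.bounded_linear_left has_derivative_diff[OF has_derivative_const F]])
  have d1: "((\<lambda>y. G y ** v y) has_derivative (\<lambda>h. G x ** ((0 - F' h) ** G x))) (at x)"
    by (rule bb_deriv_zero[OF mm_bb Gc vd]) (simp add: v_def)
  have d2: "((\<lambda>y. G x + G y ** v y) has_derivative (\<lambda>h. 0 + G x ** ((0 - F' h) ** G x))) (at x)"
    by (rule has_derivative_add[OF has_derivative_const d1])
  have e1: "(\<lambda>y. G x + G y ** v y) = G" using key by (auto simp: fun_eq_iff algebra_simps)
  have e2: "(\<lambda>h. 0 + G x ** ((0 - F' h) ** G x)) = (\<lambda>h. - (G x ** F' h ** G x))"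
    by (simp add: fun_eq_iff matrix_neg_left matrix_neg_right matrix_mul_assoc)
  show ?thesis using d2 unfolding e1 e2 .
qed


lemma entry_deriv: "((\<lambda>A::real^'n^'m. A $ i $ j) has_derivative (\<lambda>H. H $ i $ j)) F"
proof -
  have "bounded_linear (\<lambda>A::real^'n^'m. A $ i $ j)"
    using bounded_linear_compose[OF bounded_linear_vec_nth[of j] bounded_linear_vec_nth[of i]] by simp
  then show ?thesis by (rule bounded_linear.has_derivative[OF _ has_derivative_ident])
qed

lemma perm_term_zero:
  fixes p :: "'n::finite \<Rightarrow> 'n"
  assumes p: "p permutes UNIV" and pid: "p \<noteq> id"
  shows "(\<Prod>j\<in>UNIV - {i}. (mat 1 :: real^'n^'n) $ j $ p j) = 0"
proof -
  obtain k where k: "p k \<noteq> k" using pid by (auto simp: fun_eq_iff)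
  have injp: "inj p" using p permutes_inj by blast
  obtain j where j: "j \<noteq> i" "p j \<noteq> j"
  proof (cases "k = i")
    case True
    have "p (p k) \<noteq> p k" using k injp by (metis injD)
    moreover have "p k \<noteq> i" using k True by simp
    ultimately show ?thesis using that by blast
  next
    case False then show ?thesis using that k by blast
  qed
  show ?thesis
    by (rule prod_zero) (use j in \<open>auto simp: mat_def intro!: bexI[of _ j]\<close>)
qed

lemma det_deriv_I: "(det has_derivative trace) (at (mat 1 :: real^'n^'n))"
proof -
  let ?P = "{p. p permutes (UNIV::'n set)}"
  have d: "((\<lambda>A::real^'n^'n. \<Sum>p\<in>?P. of_int (sign p) * (\<Prod>i\<in>UNIV. A $ i $ p i)) has_derivative
      (\<lambda>H. \<Sum>p\<in>?P. of_int (sign p) * (\<Sum>i\<in>UNIV. H $ i $ p i * (\<Prod>j\<in>UNIV - {i}. (mat 1 :: real^'n^'n) $ j $ p j))))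
      (at (mat 1))"
    by (intro has_derivative_sum has_derivative_mult_right has_derivative_prod entry_deriv)
  have e: "(\<Sum>p\<in>?P. of_int (sign p) * (\<Sum>i\<in>UNIV. H $ i $ p i * (\<Prod>j\<in>UNIV - {i}. (mat 1 :: real^'n^'n) $ j $ p j)))
      = trace H" for H :: "real^'n^'n"
  proof -
    have fin: "finite ?P" by (simp add: finite_permutations)
    have idP: "id \<in> ?P" by (simp add: permutes_id)
    let ?g = "\<lambda>p. of_int (sign p) * (\<Sum>i\<in>UNIV. H $ i $ p i * (\<Prod>j\<in>UNIV - {i}. (mat 1 :: real^'n^'n) $ j $ p j))"
    have "sum ?g ?P = ?g id + sum ?g (?P - {id})"
      by (rule sum.remove[OF fin idP])
    also have "sum ?g (?P - {id}) = 0"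
      by (rule sum.neutral) (auto simp: perm_term_zero)
    also have "?g id = trace H"
      by (simp add: trace_def mat_def)
    finally show ?thesis by simp
  qed
  have "det = (\<lambda>A::real^'n^'n. \<Sum>p\<in>?P. of_int (sign p) * (\<Prod>i\<in>UNIV. A $ i $ p i))"
    by (simp add: fun_eq_iff det_def)
  moreover have "trace = (\<lambda>H. \<Sum>p\<in>?P. of_int (sign p) * (\<Sum>i\<in>UNIV. H $ i $ p i * (\<Prod>j\<in>UNIV - {i}. (mat 1 :: real^'n^'n) $ j $ p j)))"
    using e by (simp add: fun_eq_iff)
  ultimately show ?thesis using d by simp
qed

lemma det_deriv:
  fixes A N :: "real^'n^'n"
  assumes r: "A ** N = mat 1" and l: "N ** A = mat 1"
  shows "(det has_derivative (\<lambda>H. det A * trace (N ** H))) (at A)"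
proof -
  interpret bb: bounded_bilinear "(**) :: real^'n^'n \<Rightarrow> real^'n^'n \<Rightarrow> real^'n^'n" by (rule mm_bb)
  have lin: "((\<lambda>X. N ** X) has_derivative (\<lambda>H. N ** H)) (at A)"
    by (rule bounded_linear.has_derivative[OF bb.bounded_linear_right has_derivative_ident])
  have dI: "(det has_derivative trace) (at (N ** A))" using det_deriv_I l by simp
  have c: "((\<lambda>X. det (N ** X)) has_derivative (\<lambda>H. trace (N ** H))) (at A)"
    using diff_chain_at[OF lin dI] by (simp add: o_def)
  have c2: "((\<lambda>X. det A * det (N ** X)) has_derivative (\<lambda>H. det A * trace (N ** H))) (at A)"
    by (rule has_derivative_mult_right[OF c])
  have "(\<lambda>X. det A * det (N ** X)) = det"
  proof
    fix X :: "real^'n^'n"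
    have "det A * det (N ** X) = det (A ** (N ** X))" by (simp add: det_mul)
    also have "\<dots> = det X" by (simp add: matrix_mul_assoc r)
    finally show "det A * det (N ** X) = det X" .
  qed
  then show ?thesis using c2 by simp
qed


lemma matrix_inv_eq:
  fixes A X :: "real^'n^'n"
  assumes "A ** X = mat 1"
  shows "matrix_inv A = X"
proof -
  have ex: "\<exists>A'. A ** A' = mat 1 \<and> A' ** A = mat 1"
    using assms matrix_left_right_inverse by blast
  define Y where "Y = matrix_inv A"
  have Y: "A ** Y = mat 1 \<and> Y ** A = mat 1"
    unfolding Y_def matrix_inv_def by (rule someI_ex[OF ex])
  have "Y = Y ** (A ** X)" using assms by simp
  also have "\<dots> = X" using Y by (simp add: matrix_mul_assoc)
  finally show ?thesis by (simp add: Y_def)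
qed

lemma diag_mult_vec: "diag_mat v *v z = (\<chi> i. v $ i * z $ i)"
  unfolding diag_mat_def matrix_vector_mult_def vec_eq_iff
  by (simp add: if_distrib[where f="\<lambda>a. a * _"] cong: if_cong)

lemma Gam_quad:
  assumes lam: "\<forall>i. lam $ i \<ge> 0"
  shows "x \<bullet> x \<le> x \<bullet> (Gam B lam *v x)"
proof -
  let ?z = "transpose B *v x"
  have "x \<bullet> ((B ** diag_mat lam ** transpose B) *v x) = ?z \<bullet> (diag_mat lam *v ?z)"
    by (simp add: matrix_vector_mul_assoc[symmetric] dot_lmul_matrix[symmetric])
  also have "\<dots> = (\<Sum>i\<in>UNIV. lam $ i * (?z $ i)^2)"
    by (simp add: diag_mult_vec inner_vec_def power2_eq_square mult_ac)
  also have "\<dots> \<ge> 0" using lam by (intro sum_nonneg) simp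
  finally have "0 \<le> x \<bullet> ((B ** diag_mat lam ** transpose B) *v x)" .
  then show ?thesis
    by (simp add: Gam_def matrix_vector_mult_add_rdistrib inner_add_right)
qed

lemma Gam_norm:
  assumes lam: "\<forall>i. lam $ i \<ge> 0"
  shows "norm x \<le> norm (Gam B lam *v x)"
proof -
  have "norm x ^ 2 \<le> x \<bullet> (Gam B lam *v x)" using Gam_quad[OF lam] by (simp add: power2_norm_eq_inner)
  also have "\<dots> \<le> norm x * norm (Gam B lam *v x)" by (rule norm_cauchy_schwarz)
  finally have "norm x * norm x \<le> norm x * norm (Gam B lam *v x)" by (simp add: power2_eq_square)
  then show ?thesis
    by (cases "norm x = 0") (auto simp: mult_le_cancel_left)
qed

lemma Gam_sym: "transpose (Gam B lam) = Gam B lam"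
proof -
  have "transpose (diag_mat lam) = diag_mat lam"
    by (simp add: transpose_def diag_mat_def vec_eq_iff)
  then have "transpose (B ** diag_mat lam ** transpose B) = B ** diag_mat lam ** transpose B"
    by (simp only: matrix_transpose_mul transpose_transpose matrix_mul_assoc)
  then show ?thesis
    by (simp add: Gam_def transpose_add)
qed

lemma Gam_inv:
  assumes lam: "\<forall>i. lam $ i \<ge> 0"
  shows "Gam B lam ** matrix_inv (Gam B lam) = mat 1"
    and "matrix_inv (Gam B lam) ** Gam B lam = mat 1"
proof -
  have "\<forall>x. Gam B lam *v x = 0 \<longrightarrow> x = 0"
  proof (intro allI impI)
    fix x assume "Gam B lam *v x = 0"
    then have "norm x \<le> 0" using Gam_norm[OF lam, of x B] by simp
    then show "x = 0" by simp
  qed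
  then obtain Y where Y: "Y ** Gam B lam = mat 1"
    using matrix_left_invertible_ker by blast
  then have Y2: "Gam B lam ** Y = mat 1" using matrix_left_right_inverse by blast
  then have "matrix_inv (Gam B lam) = Y" by (rule matrix_inv_eq)
  then show "Gam B lam ** matrix_inv (Gam B lam) = mat 1" "matrix_inv (Gam B lam) ** Gam B lam = mat 1"
    using Y Y2 by auto
qed

lemma Ginv_sym:
  assumes lam: "\<forall>i. lam $ i \<ge> 0"
  shows "transpose (matrix_inv (Gam B lam)) = matrix_inv (Gam B lam)"
proof -
  have "Gam B lam ** transpose (matrix_inv (Gam B lam)) = mat 1"
    using arg_cong[OF Gam_inv(2)[OF lam, of B], of transpose]
    by (simp add: matrix_transpose_mul Gam_sym)
  then show ?thesis using matrix_inv_eq by metis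
qed

lemma Ginv_bound:
  fixes B :: "real^'r^'M"
  assumes lam: "\<forall>i. lam $ i \<ge> 0"
  shows "norm (matrix_inv (Gam B lam)) \<le> real CARD('M)"
proof -
  let ?N = "matrix_inv (Gam B lam)"
  have col: "norm (?N $ i) \<le> 1" for i
  proof -
    have sym: "?N $ k $ i = ?N $ i $ k" for k
    proof -
      have "transpose ?N $ i $ k = ?N $ i $ k" using Ginv_sym[OF lam, of B] by simp
      then show ?thesis by (simp add: transpose_def)
    qed
    have e: "?N $ i = ?N *v axis i 1"
      by (simp add: matrix_vector_mult_basis column_def vec_eq_iff sym)
    have "norm (?N *v axis i 1) \<le> norm (Gam B lam *v (?N *v axis i 1))" by (rule Gam_norm[OF lam])
    also have "\<dots> = 1" by (simp add: matrix_vector_mul_assoc Gam_inv[OF lam])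
    finally show ?thesis using e by simp
  qed
  have "norm ?N \<le> (\<Sum>i\<in>UNIV. norm (?N $ i))"
    unfolding norm_vec_def by (rule L2_set_le_sum) simp
  also have "\<dots> \<le> (\<Sum>i\<in>(UNIV::'M set). 1)" by (intro sum_mono col)
  finally show ?thesis by simp
qed


lemmas mm_deriv = bounded_bilinear.FDERIV[OF mm_bb]
lemmas tr_deriv = bounded_linear.has_derivative[OF transpose_bl]
lemmas trace_deriv = bounded_linear.has_derivative[OF trace_bl]

definition dGam :: "real^'r^'M \<Rightarrow> real^'r \<Rightarrow> real^'r^'M \<Rightarrow> real^'M^'M" where
  "dGam B lam D = D ** diag_mat lam ** transpose B + B ** diag_mat lam ** transpose D"

lemma Gam_deriv: "((\<lambda>B. Gam B lam) has_derivative dGam B lam) (at B within s)"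
proof -
  have "((\<lambda>B. B ** diag_mat lam ** transpose B + mat 1) has_derivative
     (\<lambda>h. (B ** diag_mat lam) ** transpose h + (B ** 0 + h ** diag_mat lam) ** transpose B + 0)) (at B within s)"
    by (intro has_derivative_add mm_deriv tr_deriv has_derivative_ident has_derivative_const)
  moreover have "(\<lambda>h. (B ** diag_mat lam) ** transpose h + (B ** 0 + h ** diag_mat lam) ** transpose B + 0) = dGam B lam"
    by (simp add: fun_eq_iff dGam_def)
  ultimately show ?thesis by (simp add: Gam_def[abs_def])
qed

lemma Ginv_deriv:
  fixes B :: "real^'r^'M"
  assumes lam: "\<forall>i. lam $ i \<ge> 0"
  shows "((\<lambda>B. matrix_inv (Gam B lam)) has_derivative
     (\<lambda>D. - (matrix_inv (Gam B lam) ** dGam B lam D ** matrix_inv (Gam B lam)))) (at B)"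
  by (rule inv_deriv[OF Gam_deriv Gam_inv(1)[OF lam] Gam_inv(2)[OF lam] Ginv_bound[OF lam]])

lemma detGam_deriv:
  fixes B :: "real^'r^'M"
  assumes lam: "\<forall>i. lam $ i \<ge> 0"
  shows "((\<lambda>B. det (Gam B lam)) has_derivative
     (\<lambda>D. det (Gam B lam) * trace (matrix_inv (Gam B lam) ** dGam B lam D))) (at B)"
  using diff_chain_at[OF Gam_deriv det_deriv[OF Gam_inv(1)[OF lam] Gam_inv(2)[OF lam]]]
  by (simp add: o_def)

lemma detGam_pos:
  fixes B :: "real^'r^'M"
  assumes lam: "\<forall>i. lam $ i \<ge> 0"
  shows "det (Gam B lam) > 0"
proof (rule ccontr)
  assume neg: "\<not> det (Gam B lam) > 0"
  define h where "h = (\<lambda>t::real. det (Gam (t *\<^sub>R B) lam))"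
  have nz: "h t \<noteq> 0" for t
  proof
    assume "h t = 0"
    then have "det (Gam (t *\<^sub>R B) lam) * det (matrix_inv (Gam (t *\<^sub>R B) lam)) = 0" by (simp add: h_def)
    then have "det (Gam (t *\<^sub>R B) lam ** matrix_inv (Gam (t *\<^sub>R B) lam)) = 0" by (simp add: det_mul)
    then show False using Gam_inv(1)[OF lam, of "t *\<^sub>R B"] by simp
  qed
  have cont: "isCont h t" for t
  proof -
    have "((\<lambda>t::real. t *\<^sub>R B) has_derivative (\<lambda>s. s *\<^sub>R B)) (at t)"
      by (intro derivative_eq_intros) auto
    from has_derivative_continuous[OF diff_chain_at[OF this detGam_deriv[OF lam]]]
    show ?thesis by (simp add: h_def o_def)
  qed
  have h0: "h 0 = 1" by (simp add: h_def Gam_def)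
  have h1: "h 1 \<le> 0" using neg by (simp add: h_def)
  obtain t where "h t = 0" using IVT2[of h 1 0 0] h0 h1 cont by auto
  then show False using nz by blast
qed


lemma trace_alg1:
  fixes N :: "real^'M^'M" and B D :: "real^'r^'M" and L :: "real^'r^'r"
  assumes N: "transpose N = N" and L: "transpose L = L"
  shows "trace (N ** (D ** L ** transpose B + B ** L ** transpose D)) = 2 * trace (transpose (N ** B ** L) ** D)"
proof -
  have tQ: "transpose (N ** B ** L) = L ** transpose B ** N"
    by (simp add: matrix_transpose_mul N L matrix_mul_assoc)
  have a: "trace (N ** (D ** L ** transpose B)) = trace (transpose (N ** B ** L) ** D)"
  proof -
    have "trace (N ** (D ** L ** transpose B)) = trace ((N ** D) ** (L ** transpose B))"
      by (simp add: matrix_mul_assoc)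
    also have "\<dots> = trace ((L ** transpose B) ** (N ** D))" by (rule trace_mul_sym)
    also have "\<dots> = trace (transpose (N ** B ** L) ** D)" by (simp add: tQ matrix_mul_assoc)
    finally show ?thesis .
  qed
  have b: "trace (N ** (B ** L ** transpose D)) = trace (transpose (N ** B ** L) ** D)"
  proof -
    have "trace (N ** (B ** L ** transpose D)) = trace (transpose (N ** (B ** L ** transpose D)))"
      by (simp add: trace_transpose)
    also have "transpose (N ** (B ** L ** transpose D)) = D ** transpose (N ** B ** L)"
      by (simp add: matrix_transpose_mul N L matrix_mul_assoc)
    also have "trace (D ** transpose (N ** B ** L)) = trace (transpose (N ** B ** L) ** D)"
      by (rule trace_mul_sym)
    finally show ?thesis .
  qed
  show ?thesis using a b by (simp add: matrix_add_ldistrib trace_add)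
qed

lemma trace_alg2:
  fixes N S :: "real^'M^'M" and B D :: "real^'r^'M" and L :: "real^'r^'r"
  assumes N: "transpose N = N" and S: "transpose S = S" and L: "transpose L = L"
  shows "trace (N ** (D ** L ** transpose B + B ** L ** transpose D) ** N ** S)
       = 2 * trace (transpose (N ** S ** N ** B ** L) ** D)"
proof -
  have tP: "transpose (N ** S ** N ** B ** L) = L ** transpose B ** N ** S ** N"
    by (simp add: matrix_transpose_mul N L S matrix_mul_assoc)
  have a: "trace (N ** (D ** L ** transpose B) ** N ** S) = trace (transpose (N ** S ** N ** B ** L) ** D)"
  proof -
    have "trace (N ** (D ** L ** transpose B) ** N ** S) = trace ((N ** D) ** (L ** transpose B ** N ** S))"
      by (simp add: matrix_mul_assoc)
    also have "\<dots> = trace ((L ** transpose B ** N ** S) ** (N ** D))" by (rule trace_mul_sym)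
    also have "\<dots> = trace (transpose (N ** S ** N ** B ** L) ** D)" by (simp add: tP matrix_mul_assoc)
    finally show ?thesis .
  qed
  have b: "trace (N ** (B ** L ** transpose D) ** N ** S) = trace (transpose (N ** S ** N ** B ** L) ** D)"
  proof -
    have "trace (N ** (B ** L ** transpose D) ** N ** S) = trace (transpose (N ** (B ** L ** transpose D) ** N ** S))"
      by (simp add: trace_transpose)
    also have "transpose (N ** (B ** L ** transpose D) ** N ** S) = (S ** N ** D) ** (L ** transpose B ** N)"
      by (simp add: matrix_transpose_mul N L S matrix_mul_assoc)
    also have "trace ((S ** N ** D) ** (L ** transpose B ** N)) = trace ((L ** transpose B ** N) ** (S ** N ** D))"
      by (rule trace_mul_sym)
    also have "\<dots> = trace (transpose (N ** S ** N ** B ** L) ** D)" by (simp add: tP matrix_mul_assoc)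
    finally show ?thesis .
  qed
  show ?thesis using a b by (simp add: matrix_add_ldistrib matrix_add_rdistrib trace_add)
qed

definition fS :: "real^'M^'M \<Rightarrow> real^'r \<Rightarrow> real^'r^'M \<Rightarrow> real" where
  "fS S lam B = 1/2 * trace (matrix_inv (Gam B lam) ** S) + 1/2 * ln (det (Gam B lam))"

definition gradS :: "real^'M^'M \<Rightarrow> real^'r \<Rightarrow> real^'r^'M \<Rightarrow> real^'r^'M" where
  "gradS S lam B = - (matrix_inv (Gam B lam) ** S ** matrix_inv (Gam B lam) ** B ** diag_mat lam)
      + matrix_inv (Gam B lam) ** B ** diag_mat lam"

lemma diag_sym: "transpose (diag_mat v) = diag_mat v"
  by (simp add: transpose_def diag_mat_def vec_eq_iff)

lemma fS_deriv:
  fixes B :: "real^'r^'M"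
  assumes lam: "\<forall>i. lam $ i \<ge> 0" and S: "transpose S = S"
  shows "(fS S lam has_derivative (\<lambda>D. gradS S lam B \<bullet> D)) (at B)"
proof -
  let ?N = "matrix_inv (Gam B lam)"
  let ?d = "det (Gam B lam)"
  have dpos: "?d > 0" by (rule detGam_pos[OF lam])
  have d1: "((\<lambda>B. matrix_inv (Gam B lam) ** S) has_derivative
      (\<lambda>D. ?N ** 0 + (- (?N ** dGam B lam D ** ?N)) ** S)) (at B)"
    by (intro mm_deriv Ginv_deriv[OF lam] has_derivative_const)
  have d2: "((\<lambda>B. ln (det (Gam B lam))) has_derivative
      (\<lambda>D. ?d * trace (?N ** dGam B lam D) * inverse ?d)) (at B)"
    by (rule has_derivative_ln[OF dpos detGam_deriv[OF lam]])
  have d: "(fS S lam has_derivative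
      (\<lambda>D. 1/2 * trace (?N ** 0 + (- (?N ** dGam B lam D ** ?N)) ** S)
         + 1/2 * (?d * trace (?N ** dGam B lam D) * inverse ?d))) (at B)"
    unfolding fS_def[abs_def]
    by (intro has_derivative_add has_derivative_mult_right trace_deriv d1 d2)
  have e: "1/2 * trace (?N ** 0 + (- (?N ** dGam B lam D ** ?N)) ** S)
         + 1/2 * (?d * trace (?N ** dGam B lam D) * inverse ?d) = gradS S lam B \<bullet> D" for D
  proof -
    have Ns: "transpose ?N = ?N" by (rule Ginv_sym[OF lam])
    have t1: "trace (?N ** dGam B lam D ** ?N ** S) = 2 * trace (transpose (?N ** S ** ?N ** B ** diag_mat lam) ** D)"
      unfolding dGam_def by (rule trace_alg2[OF Ns S diag_sym])
    have t2: "trace (?N ** dGam B lam D) = 2 * trace (transpose (?N ** B ** diag_mat lam) ** D)"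
      unfolding dGam_def by (rule trace_alg1[OF Ns diag_sym])
    have "trace ((- (?N ** dGam B lam D ** ?N)) ** S) = - trace (?N ** dGam B lam D ** ?N ** S)"
      by (simp add: matrix_neg_left trace_def sum_negf)
    then have l: "1/2 * trace (?N ** 0 + (- (?N ** dGam B lam D ** ?N)) ** S)
         + 1/2 * (?d * trace (?N ** dGam B lam D) * inverse ?d)
        = - trace (transpose (?N ** S ** ?N ** B ** diag_mat lam) ** D) + trace (transpose (?N ** B ** diag_mat lam) ** D)"
      using dpos t1 t2 by simp
    have r: "gradS S lam B \<bullet> D = - trace (transpose (?N ** S ** ?N ** B ** diag_mat lam) ** D) + trace (transpose (?N ** B ** diag_mat lam) ** D)"
      unfolding inner_trace gradS_def transpose_add transpose_neg matrix_add_rdistrib matrix_neg_left trace_add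
      by (simp add: trace_def sum_negf)
    show ?thesis using l r by simp
  qed
  show ?thesis using d e by simp
qed


lemma egrad_eq:
  assumes "(f has_derivative (\<lambda>D. G \<bullet> D)) (at B)"
  shows "egrad f B = G"
  unfolding egrad_def
proof (rule the_equality)
  show "(f has_derivative (\<lambda>D. G \<bullet> D)) (at B)" by (rule assms)
next
  fix G' assume "(f has_derivative (\<lambda>D. G' \<bullet> D)) (at B)"
  then have "(\<lambda>D. G' \<bullet> D) = (\<lambda>D. G \<bullet> D)" using assms has_derivative_unique by blast
  then have "G' \<bullet> (G' - G) = G \<bullet> (G' - G)" by metis
  then have "(G' - G) \<bullet> (G' - G) = 0" by (simp add: inner_diff_left)
  then show "G' = G" by simp
qed

lemma egrad_fS:
  assumes lam: "\<forall>i. lam $ i \<ge> 0" and S: "transpose S = S"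
  shows "egrad (fS S lam) = gradS S lam"
  using egrad_eq[OF fS_deriv[OF lam S]] by (simp add: fun_eq_iff)

lemma mm_two_left: "(2 * A) ** B = 2 * (A ** (B::real^'p^'n))" for A :: "real^'n^'m"
  by (simp add: matrix_matrix_mult_def vec_eq_iff sum_distrib_left mult.assoc)

lemma gradS_deriv:
  fixes B :: "real^'r^'M"
  assumes lam: "\<forall>i. lam $ i \<ge> 0"
  shows "(gradS (Gam B lam) lam has_derivative
     (\<lambda>h. matrix_inv (Gam B lam) ** dGam B lam h ** matrix_inv (Gam B lam) ** B ** diag_mat lam)) (at B)"
proof -
  let ?N = "matrix_inv (Gam B lam)"
  let ?G = "Gam B lam"
  have i1: "?N ** ?G = mat 1" and i2: "?G ** ?N = mat 1" using Gam_inv[OF lam] by auto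
  have i1': "X ** ?N ** ?G = X" for X :: "real^'M^'M"
    by (simp add: matrix_mul_assoc[symmetric] i1)
  have i2': "X ** ?G ** ?N = X" for X :: "real^'M^'M"
    by (simp add: matrix_mul_assoc[symmetric] i2)
  show ?thesis
    unfolding gradS_def[abs_def]
    apply (rule has_derivative_eq_rhs)
     apply (rule has_derivative_add)
      apply (rule has_derivative_minus)
      apply (rule mm_deriv)+
           apply (rule Ginv_deriv[OF lam])
          apply (rule has_derivative_const)
         apply (rule Ginv_deriv[OF lam])
        apply (rule has_derivative_ident)
       apply (rule has_derivative_const)
      apply (rule mm_deriv)+
        apply (rule Ginv_deriv[OF lam])
       apply (rule has_derivative_ident)
      apply (rule has_derivative_const)
    apply (simp add: fun_eq_iff matrix_add_ldistrib matrix_add_rdistrib matrix_diff_ldistrib matrix_diff_rdistrib matrix_neg_left matrix_neg_right matrix_mul_assoc i1 i2 i1' i2' mm_two_left)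
    done
qed


lemma diag_left: "(diag_mat a ** M) $ i $ j = a $ i * M $ i $ j"
  by (simp add: diag_mat_def matrix_matrix_mult_def if_distrib[where f="\<lambda>x. x * _"] cong: if_cong)
lemma diag_right: "(M ** diag_mat a) $ i $ j = M $ i $ j * a $ j"
  by (simp add: diag_mat_def matrix_matrix_mult_def if_distrib[where f="\<lambda>x. _ * x"] cong: if_cong)
lemma diag_mul: "diag_mat a ** diag_mat b = diag_mat (\<chi> i. a $ i * b $ i)"
  by (simp add: vec_eq_iff diag_right) (simp add: diag_mat_def)
lemma diag_comm: "diag_mat a ** diag_mat b = diag_mat b ** diag_mat a"
  by (simp add: diag_mul mult.commute)
lemma mat1_diag: "mat 1 = diag_mat (\<chi> i. 1)"
  by (simp add: mat_def diag_mat_def vec_eq_iff)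
lemma diag_diff: "diag_mat a - diag_mat b = diag_mat (a - b)"
  by (simp add: diag_mat_def vec_eq_iff)

locale setting =
  fixes B :: "real^'r^'M" and lam :: "real^'r" and S :: "real^'M^'M"
  assumes orth: "transpose B ** B = mat 1"
    and pos: "\<forall>i. lam $ i > 0"
    and dist: "\<forall>i j. i \<noteq> j \<longrightarrow> lam $ i \<noteq> lam $ j"
    and Ssym: "transpose S = S"
begin

definition "L = diag_mat lam"
definition "K = diag_mat (\<chi> i. 1 / (1 + lam $ i))"
definition "Dd = diag_mat (\<chi> i. lam $ i / (1 + lam $ i))"
definition "Linv = diag_mat (\<chi> i. 1 / lam $ i)"
definition "Nb = mat 1 - B ** Dd ** transpose B"
definition "P = mat 1 - B ** transpose B"

lemma lam0: "\<forall>i. lam $ i \<ge> 0" using pos by (simp add: less_imp_le)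

lemma orth': "X ** transpose B ** B = X" for X :: "real^'r^'k"
  by (simp add: matrix_mul_assoc[symmetric] orth)

lemma Lsym: "transpose L = L" by (simp add: L_def diag_sym)
lemma Ksym: "transpose K = K" by (simp add: K_def diag_sym)
lemma Ddsym: "transpose Dd = Dd" by (simp add: Dd_def diag_sym)
lemma Linvsym: "transpose Linv = Linv" by (simp add: Linv_def diag_sym)

lemma I_Dd: "mat 1 - Dd = K"
proof -
  have "1 - lam $ i / (1 + lam $ i) = 1 / (1 + lam $ i)" for i
    using pos[rule_format, of i] by (simp add: field_simps)
  then have "(\<chi> i. 1) - (\<chi> i. lam $ i / (1 + lam $ i)) = (\<chi> i. 1 / (1 + lam $ i))"
    by (simp add: vec_eq_iff)
  then show ?thesis by (simp add: mat1_diag Dd_def K_def diag_diff)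
qed

lemma LK: "L ** K = Dd"
  by (simp add: L_def K_def Dd_def diag_mul)

lemma L_Linv: "L ** Linv = mat 1"
proof -
  have "(\<chi> i. lam $ i * (\<chi> i. 1 / lam $ i) $ i) = (\<chi> i. 1)"
    using pos by (simp add: vec_eq_iff less_imp_neq[symmetric])
  then show ?thesis by (simp add: L_def Linv_def diag_mul mat1_diag)
qed

lemma L_LDd_Dd: "L - L ** Dd - Dd = 0"
proof -
  have "lam $ i - lam $ i * (lam $ i / (1 + lam $ i)) - lam $ i / (1 + lam $ i) = 0" for i
    using pos[rule_format, of i] by (simp add: field_simps)
  then show ?thesis
    by (simp add: L_def Dd_def diag_mul diag_diff vec_eq_iff) (simp add: diag_mat_def vec_eq_iff)
qed

lemma Gam_Nb: "Gam B lam ** Nb = mat 1"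
proof -
  have "Gam B lam ** Nb = mat 1 + B ** (L - L ** Dd - Dd) ** transpose B"
    by (simp add: Gam_def Nb_def L_def matrix_add_rdistrib matrix_diff_ldistrib matrix_diff_rdistrib
        matrix_add_ldistrib matrix_mul_assoc orth')
  then show ?thesis by (simp add: L_LDd_Dd)
qed

lemma Ninv: "matrix_inv (Gam B lam) = Nb"
  by (rule matrix_inv_eq[OF Gam_Nb])

lemma Nb_sym: "transpose Nb = Nb"
  by (simp add: Nb_def transpose_diff matrix_transpose_mul Ddsym matrix_mul_assoc)

lemma NbB: "Nb ** B = B ** K"
proof -
  have "Nb ** B = B ** (mat 1 - Dd)"
    by (simp add: Nb_def matrix_diff_rdistrib matrix_diff_ldistrib matrix_mul_assoc orth')
  then show ?thesis by (simp add: I_Dd)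
qed

lemma BtNb: "transpose B ** Nb = K ** transpose B"
  using arg_cong[OF NbB, of transpose] by (simp add: matrix_transpose_mul Nb_sym Ksym)

lemma PB: "P ** B = 0"
  by (simp add: P_def matrix_diff_rdistrib matrix_mul_assoc orth')
lemma BtP: "transpose B ** P = 0"
  by (simp add: P_def matrix_diff_ldistrib matrix_mul_assoc orth)
lemma Psym: "transpose P = P"
  by (simp add: P_def transpose_diff matrix_transpose_mul)
lemma PP: "P ** P = P"
  by (simp add: P_def matrix_diff_ldistrib matrix_diff_rdistrib matrix_mul_assoc orth')
lemma PNb: "P ** Nb = P"
  by (simp add: Nb_def matrix_diff_ldistrib matrix_mul_assoc PB)

end

context setting begin

definition "W = transpose B ** S ** B"
definition "AT = (\<chi> i j. if i = j then 0 else W $ i $ j / (lam $ i - lam $ j))"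
definition "T0 = B ** AT - P ** S ** B ** Linv"
definition "g = gradS S lam B"
definition "Gr = g - B ** transpose g ** B"
definition "Yf D = Nb ** dGam B lam D ** Nb ** B ** L"

lemma NbB': "X ** Nb ** B = X ** B ** K" for X :: "real^'M^'k"
  by (simp add: matrix_mul_assoc[symmetric] NbB)
lemma BtNb': "X ** transpose B ** Nb = X ** K ** transpose B" for X :: "real^'r^'k"
  by (simp add: matrix_mul_assoc[symmetric] BtNb)
lemma PB': "X ** P ** B = 0" for X :: "real^'M^'k"
  by (simp add: matrix_mul_assoc[symmetric] PB)
lemma BtP': "X ** transpose B ** P = 0" for X :: "real^'r^'k"
  by (simp add: matrix_mul_assoc[symmetric] BtP)
lemma PNb': "X ** P ** Nb = X ** P" for X :: "real^'M^'k"
  by (simp add: matrix_mul_assoc[symmetric] PNb)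
lemma PP': "X ** P ** P = X ** P" for X :: "real^'M^'k"
  by (simp add: matrix_mul_assoc[symmetric] PP)

lemmas msimps = matrix_add_ldistrib matrix_add_rdistrib matrix_diff_ldistrib matrix_diff_rdistrib
  matrix_neg_left matrix_neg_right matrix_mul_assoc transpose_add transpose_diff transpose_neg
  matrix_transpose_mul mm_two_left
lemmas bsimps = orth orth' NbB NbB' BtNb BtNb' PB PB' BtP BtP' PNb PNb' PP PP'
lemmas ssimps = Nb_sym Psym Lsym Ksym Linvsym Ssym

lemma Y1: "Yf D = Nb ** D ** L ** K ** L + B ** K ** L ** transpose D ** B ** K ** L"
  by (simp add: Yf_def dGam_def L_def[symmetric] msimps bsimps)

lemma Y2: "transpose B ** Yf D = K ** (transpose B ** D) ** L ** K ** L + K ** L ** (transpose D ** B) ** K ** L"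
  by (simp add: Y1 msimps bsimps)

lemma Y3: "P ** Yf D = P ** D ** L ** K ** L"
  by (simp add: Y1 msimps bsimps)

lemma Yf_diff: "Yf (D1 - D2) = Yf D1 - Yf D2"
  by (simp add: Y1 msimps)

lemma Wsym: "transpose W = W"
  by (simp add: W_def msimps Ssym)

lemma AT_skew: "transpose AT = - AT"
proof -
  have "W $ j $ i = W $ i $ j" for i j
    using arg_cong[OF Wsym, of "\<lambda>M. M $ i $ j"] by (simp add: transpose_def)
  then have e: "AT $ j $ i = - (AT $ i $ j)" for i j
  proof (cases "i = j")
    case False
    have "W $ i $ j / (lam $ j - lam $ i) = - (W $ i $ j / (lam $ i - lam $ j))"
      by (metis minus_diff_eq divide_minus_right)
    then show ?thesis using False by (simp add: AT_def \<open>\<And>i j. W $ j $ i = W $ i $ j\<close>)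
  qed (simp add: AT_def)
  show ?thesis
  proof (subst vec_eq_iff, intro allI, subst vec_eq_iff, intro allI)
    fix i j
    show "transpose AT $ i $ j = (- AT) $ i $ j"
      using e[of i j] by (simp add: transpose_def)
  qed
qed

lemma T1: "transpose B ** T0 = AT"
  by (simp add: T0_def msimps bsimps)
lemma T2: "P ** T0 = - (P ** S ** B ** Linv)"
  by (simp add: T0_def msimps bsimps)
lemma T3: "transpose T0 ** B = - AT"
  using arg_cong[OF T1, of transpose] by (simp add: msimps ssimps AT_skew)

lemma G1: "g = - (Nb ** S ** B ** K ** L) + B ** K ** L"
  unfolding g_def gradS_def Ninv L_def[symmetric] by (simp add: matrix_mul_assoc NbB NbB')
lemma G2: "transpose B ** g = - (K ** W ** K ** L) + K ** L"
  by (simp add: G1 W_def msimps bsimps)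
lemma G3: "transpose g ** B = - (L ** K ** W ** K) + L ** K"
  by (simp add: G1 W_def msimps bsimps ssimps)
lemma G4: "P ** g = - (P ** S ** B ** K ** L)"
  by (simp add: G1 msimps bsimps)

end

lemma mm_scaleR_left: "(k *\<^sub>R A) ** B = k *\<^sub>R (A ** (B::real^'p^'n))" for A :: "real^'n^'m"
  by (simp add: matrix_matrix_mult_def vec_eq_iff sum_distrib_left mult.assoc)
lemma mm_scaleR_right: "A ** (k *\<^sub>R B) = k *\<^sub>R (A ** (B::real^'p^'n))" for A :: "real^'n^'m"
  by (simp add: matrix_matrix_mult_def vec_eq_iff sum_distrib_left mult.left_commute)

lemma sym_skew: "transpose (Sg::real^'n^'n) = Sg \<Longrightarrow> transpose C = - C \<Longrightarrow> trace (Sg ** C) = 0"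
proof -
  assume s: "transpose Sg = Sg" and c: "transpose C = - C"
  have "trace (Sg ** C) = trace (transpose (Sg ** C))" by (simp add: trace_transpose)
  also have "\<dots> = trace ((- C) ** Sg)" by (simp add: matrix_transpose_mul s c)
  also have "\<dots> = - trace (C ** Sg)" by (simp add: matrix_neg_left trace_def sum_negf)
  also have "\<dots> = - trace (Sg ** C)" using trace_mul_sym[of C Sg] by simp
  finally show ?thesis by simp
qed

context setting begin

definition "Qm = mat 1 - (1/2) *\<^sub>R (B ** transpose B)"

lemma Linv_L: "Linv ** L = mat 1"
proof -
  have "Linv ** L = L ** Linv" unfolding L_def Linv_def by (rule diag_comm)
  then show ?thesis using L_Linv by simp
qed
lemma Linv_L': "X ** Linv ** L = X" for X :: "real^'r^'k"
  by (simp add: matrix_mul_assoc[symmetric] Linv_L)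

lemma T2': "X ** P ** T0 = - (X ** P ** S ** B ** Linv)" for X :: "real^'M^'k"
  by (simp add: matrix_mul_assoc[symmetric] T2 matrix_neg_right)

lemma Qm_sym: "transpose Qm = Qm"
  by (simp add: Qm_def transpose_diff transpose_scalar matrix_transpose_mul)
lemma BtQm: "transpose B ** Qm = (1/2) *\<^sub>R transpose B"
  by (simp add: Qm_def matrix_diff_ldistrib mm_scaleR_right matrix_mul_assoc orth)
lemma PQm: "P ** Qm = P"
  by (simp add: Qm_def matrix_diff_ldistrib mm_scaleR_right matrix_mul_assoc PB)
lemma BtGr: "transpose B ** Gr = transpose B ** g - transpose g ** B"
  by (simp add: Gr_def matrix_diff_ldistrib matrix_mul_assoc orth)
lemma PGr: "P ** Gr = P ** g"
  by (simp add: Gr_def matrix_diff_ldistrib matrix_mul_assoc PB)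

definition "Z = Yf T0 - Qm ** Gr"

lemma Z1: "P ** Z = 0"
proof -
  have "P ** Z = P ** Yf T0 - (P ** Qm) ** Gr"
    by (simp add: Z_def matrix_diff_ldistrib matrix_mul_assoc)
  also have "\<dots> = P ** T0 ** L ** K ** L - P ** g" by (simp add: Y3 PQm PGr)
  also have "\<dots> = 0"
    by (simp add: T2 G4 matrix_neg_left matrix_mul_assoc[symmetric]) (simp add: matrix_mul_assoc Linv_L')
  finally show ?thesis .
qed

lemma Z2: "transpose B ** Z = K ** AT ** L ** K ** L + K ** L ** (- AT) ** K ** L
     - (1/2) *\<^sub>R ((- (K ** W ** K ** L) + K ** L) - (- (L ** K ** W ** K) + L ** K))"
proof -
  have "transpose B ** Z = transpose B ** Yf T0 - (transpose B ** Qm) ** Gr"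
    by (simp add: Z_def matrix_diff_ldistrib matrix_mul_assoc)
  also have "\<dots> = transpose B ** Yf T0 - (1/2) *\<^sub>R (transpose B ** Gr)"
    by (simp add: BtQm mm_scaleR_left)
  also have "transpose B ** Yf T0 = K ** AT ** L ** K ** L + K ** L ** (- AT) ** K ** L"
    by (simp only: Y2 T1 T3)
  finally show ?thesis by (simp only: BtGr G2 G3)
qed

end

lemma dsum_zero:
  fixes f :: "'a::finite \<Rightarrow> 'b::finite \<Rightarrow> real"
  assumes nn: "\<forall>i j. 0 \<le> f i j" and s: "(\<Sum>i\<in>UNIV. \<Sum>j\<in>UNIV. f i j) = 0"
  shows "f i j = 0"
proof -
  have "\<forall>i\<in>UNIV. (\<Sum>j\<in>UNIV. f i j) = 0"
    using s nn by (subst sum_nonneg_eq_0_iff[symmetric]) (auto intro: sum_nonneg)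
  then have "(\<Sum>j\<in>UNIV. f i j) = 0" by simp
  then show ?thesis using nn by (simp add: sum_nonneg_eq_0_iff)
qed

lemma skew_quad_zero:
  fixes A :: "real^'r^'r" and lam k :: "real^'r"
  assumes skew: "\<And>i j. A $ j $ i = - A $ i $ j"
    and dist: "\<forall>i j. i \<noteq> j \<longrightarrow> lam $ i \<noteq> lam $ j"
    and kpos: "\<forall>i. k $ i > 0"
    and s0: "(\<Sum>i\<in>UNIV. \<Sum>j\<in>UNIV. k $ i * k $ j * lam $ j * (lam $ j - lam $ i) * (A $ i $ j)^2) = 0"
  shows "A = 0"
proof -
  define f where "f i j = k $ i * k $ j * lam $ j * (lam $ j - lam $ i) * (A $ i $ j)^2" for i j
  have sw: "(\<Sum>i\<in>UNIV. \<Sum>j\<in>UNIV. f j i) = (\<Sum>i\<in>UNIV. \<Sum>j\<in>UNIV. f i j)"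
    by (rule sum.swap)
  have "(\<Sum>i\<in>UNIV. \<Sum>j\<in>UNIV. f i j + f j i) = (\<Sum>i\<in>UNIV. \<Sum>j\<in>UNIV. f i j) + (\<Sum>i\<in>UNIV. \<Sum>j\<in>UNIV. f j i)"
    by (simp add: sum.distrib)
  also have "\<dots> = 0" using sw s0 by (simp add: f_def)
  finally have s: "(\<Sum>i\<in>UNIV. \<Sum>j\<in>UNIV. f i j + f j i) = 0" .
  have fe: "f i j + f j i = k $ i * k $ j * (lam $ j - lam $ i)^2 * (A $ i $ j)^2" for i j
  proof -
    have "(A $ j $ i)^2 = (A $ i $ j)^2" using skew[of i j] by simp
    then show ?thesis by (simp add: f_def power2_eq_square algebra_simps)
  qed
  have nn: "\<forall>i j. 0 \<le> f i j + f j i"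
    using kpos by (simp add: fe less_imp_le)
  show ?thesis
  proof (subst vec_eq_iff, intro allI, subst vec_eq_iff, intro allI)
    fix i j
    show "A $ i $ j = 0 $ i $ j"
    proof (cases "i = j")
      case True then show ?thesis using skew[of i i] by simp
    next
      case False
      have "f i j + f j i = 0" by (rule dsum_zero[OF nn s])
      then have "k $ i * k $ j * (lam $ j - lam $ i)^2 * (A $ i $ j)^2 = 0" by (simp add: fe)
      moreover have "k $ i * k $ j * (lam $ j - lam $ i)^2 \<noteq> 0"
        using kpos dist False by (simp add: less_imp_neq[symmetric])
      ultimately show ?thesis by simp
    qed
  qed
qed

lemma aux_sym:
  fixes x y w w' a b :: real
  assumes xy: "x \<noteq> y" and px: "1 + x \<noteq> 0" and py: "1 + y \<noteq> 0"
    and a: "a = w / (x - y)" and b: "b = w / (y - x)" and w': "w' = w"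
  shows "a * y * y / ((1 + x) * (1 + y)) - x * a * y / ((1 + x) * (1 + y))
      - (x * w / ((1 + x) * (1 + y)) - w * y / ((1 + x) * (1 + y))) / 2
    = b * x * x / ((1 + y) * (1 + x)) - y * b * x / ((1 + y) * (1 + x))
      - (y * w' / ((1 + y) * (1 + x)) - w' * x / ((1 + y) * (1 + x))) / 2"
proof -
  have d1: "x - y \<noteq> 0" and d2: "y - x \<noteq> 0" using xy by auto
  define D where "D = (1 + x) * (1 + y)"
  have D: "D \<noteq> 0" using px py by (simp add: D_def)
  have D': "(1 + y) * (1 + x) = D" by (simp add: D_def mult.commute)
  have ka: "a * y * y - x * a * y = - (w * y)"
  proof -
    have "a * (y - x) = - w" using d1 by (simp add: a field_simps)
    then have "y * (a * (y - x)) = - (w * y)" by (simp add: mult.commute)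
    then show ?thesis by (simp add: algebra_simps)
  qed
  have kb: "b * x * x - y * b * x = - (w * x)"
  proof -
    have "b * (x - y) = - w" using d2 by (simp add: b field_simps)
    then have "x * (b * (x - y)) = - (w * x)" by (simp add: mult.commute)
    then show ?thesis by (simp add: algebra_simps)
  qed
  have L: "a * y * y / D - x * a * y / D - (x * w / D - w * y / D) / 2 = (- (w * y)) / D - (x * w - w * y) / D / 2"
    by (simp add: ka[symmetric] diff_divide_distrib)
  have R: "b * x * x / D - y * b * x / D - (y * w / D - w * x / D) / 2 = (- (w * x)) / D - (y * w - w * x) / D / 2"
    by (simp add: kb[symmetric] diff_divide_distrib)
  show ?thesis unfolding D' D_def[symmetric] w' L R using D
    by (simp add: field_simps)
qed

context setting begin

lemma Wsym': "W $ j $ i = W $ i $ j"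
  using arg_cong[OF Wsym, of "\<lambda>M. M $ i $ j"] by (simp add: transpose_def)

lemma Sig_ent: "(transpose B ** Z) $ i $ j = (transpose B ** Z) $ j $ i"
proof (cases "i = j")
  case True then show ?thesis by simp
next
  case False
  have pi: "1 + lam $ i > 0" "1 + lam $ j > 0" using pos by (auto intro: add_pos_pos)
  have d: "lam $ i - lam $ j \<noteq> 0" "lam $ j - lam $ i \<noteq> 0" using dist False by auto
  show ?thesis
    unfolding Z2 K_def L_def
    apply (simp add: matrix_neg_left matrix_neg_right matrix_mul_assoc diag_mul diag_left diag_right)
    apply (rule aux_sym)
    using pi d False by (auto simp: AT_def Wsym'[where i=i and j=j])
qed

end

lemma div_helper: "(p/d - q/d) * c = r/(d::real)" if "(p - q) * c = r"
  using that by (simp add: diff_divide_distrib[symmetric] times_divide_eq_left)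

context setting begin

lemma Sig_sym: "transpose (transpose B ** Z) = transpose B ** Z"
proof (subst vec_eq_iff, intro allI, subst vec_eq_iff, intro allI)
  fix i j
  show "transpose (transpose B ** Z) $ i $ j = (transpose B ** Z) $ i $ j"
    using Sig_ent[of j i] by (simp add: transpose_def)
qed

lemma Z_decomp: "Z = B ** (transpose B ** Z)"
proof -
  have "Z = (B ** transpose B + P) ** Z" by (simp add: P_def)
  also have "\<dots> = B ** (transpose B ** Z) + P ** Z" by (simp add: matrix_add_rdistrib matrix_mul_assoc)
  finally show ?thesis by (simp add: Z1)
qed

lemma tangent_skew: "X \<in> tangent B \<Longrightarrow> transpose (transpose B ** X) = - (transpose B ** X)"
  unfolding tangent_def by (simp add: matrix_transpose_mul transpose_neg)

lemma exist: assumes X: "X \<in> tangent B" shows "Yf T0 \<bullet> X = canon B Gr X"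
proof -
  have can: "canon B Gr X = (Qm ** Gr) \<bullet> X"
    unfolding canon_def Qm_def[symmetric] inner_trace
    by (simp add: matrix_transpose_mul Qm_sym matrix_mul_assoc)
  have "Z \<bullet> X = trace (transpose (transpose B ** Z) ** (transpose B ** X))"
    by (subst Z_decomp) (simp add: inner_trace matrix_transpose_mul matrix_mul_assoc)
  also have "\<dots> = 0"
    unfolding Sig_sym by (rule sym_skew[OF Sig_sym tangent_skew[OF X]])
  finally have "Z \<bullet> X = 0" .
  then show ?thesis using can by (simp add: Z_def inner_diff_left)
qed

lemma T0_tangent: "T0 \<in> tangent B"
  unfolding tangent_def using T1 T3 by simp

lemma uniq:
  assumes D: "D \<in> tangent B" and H: "\<forall>X \<in> tangent B. Yf D \<bullet> X = 0"
  shows "D = 0"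
proof -
  define E where "E = P ** D"
  have E_t: "E \<in> tangent B"
    unfolding tangent_def E_def
    by (simp add: matrix_transpose_mul Psym matrix_mul_assoc BtP PB')
  have "Yf D \<bullet> E = 0" using H E_t by blast
  moreover have "Yf D \<bullet> E = (P ** Yf D) \<bullet> E"
    unfolding E_def inner_trace
    by (simp add: matrix_transpose_mul Psym matrix_mul_assoc PP')
  ultimately have "(E ** L ** K ** L) \<bullet> E = 0"
    by (simp add: Y3 E_def matrix_mul_assoc)
  then have s: "(\<Sum>a\<in>UNIV. \<Sum>j\<in>UNIV. (E $ a $ j)^2 * (lam $ j * lam $ j / (1 + lam $ j))) = 0"
    by (simp add: inner_vec_def K_def L_def diag_right power2_eq_square mult_ac)
  have nn: "\<forall>a j. 0 \<le> (E $ a $ j)^2 * (lam $ j * lam $ j / (1 + lam $ j))"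
    using pos by (auto intro!: mult_nonneg_nonneg divide_nonneg_pos simp: less_imp_le add_pos_pos)
  have E0: "E = 0"
  proof (subst vec_eq_iff, intro allI, subst vec_eq_iff, intro allI)
    fix a j
    have "(E $ a $ j)^2 * (lam $ j * lam $ j / (1 + lam $ j)) = 0" by (rule dsum_zero[OF nn s])
    moreover have "lam $ j * lam $ j / (1 + lam $ j) \<noteq> 0"
      using pos[rule_format, of j] by (simp add: add_pos_pos less_imp_neq[symmetric])
    ultimately show "E $ a $ j = 0 $ a $ j" by simp
  qed
  define A where "A = transpose B ** D"
  have DA: "D = B ** A"
  proof -
    have "D = (B ** transpose B + P) ** D" by (simp add: P_def)
    also have "\<dots> = B ** A + E" by (simp add: matrix_add_rdistrib matrix_mul_assoc A_def E_def)
    finally show ?thesis by (simp add: E0)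
  qed
  have Askew: "transpose A = - A" unfolding A_def by (rule tangent_skew[OF D])
  have DtB: "transpose D ** B = - A"
    using Askew by (simp add: A_def matrix_transpose_mul)
  have "Yf D \<bullet> D = 0" using H D by blast
  moreover have "Yf D \<bullet> D = (transpose B ** Yf D) \<bullet> A"
    by (subst (1) DA) (simp add: inner_trace matrix_transpose_mul matrix_mul_assoc)
  ultimately have "(K ** A ** L ** K ** L + K ** L ** (- A) ** K ** L) \<bullet> A = 0"
    by (simp add: Y2 DtB A_def[symmetric])
  moreover have "(K ** A ** L ** K ** L + K ** L ** (- A) ** K ** L) \<bullet> A
     = (\<Sum>i\<in>UNIV. \<Sum>j\<in>UNIV. (\<chi> i. 1 / (1 + lam $ i)) $ i * (\<chi> i. 1 / (1 + lam $ i)) $ j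
        * lam $ j * (lam $ j - lam $ i) * (A $ i $ j)^2)"
  proof -
    have nz: "1 + lam $ i \<noteq> 0" for i using pos[rule_format, of i] by linarith
    show ?thesis
      apply (simp add: inner_vec_def K_def L_def diag_right diag_left diag_mul matrix_neg_left matrix_neg_right
          matrix_mul_assoc power2_eq_square)
      apply (intro sum.cong refl)
      apply (rule div_helper)
      apply (simp add: algebra_simps)
      done
  qed
  ultimately have s2: "(\<Sum>i\<in>UNIV. \<Sum>j\<in>UNIV. (\<chi> i. 1 / (1 + lam $ i)) $ i * (\<chi> i. 1 / (1 + lam $ i)) $ j
        * lam $ j * (lam $ j - lam $ i) * (A $ i $ j)^2) = 0" by simp
  have skewe: "A $ j $ i = - A $ i $ j" for i j
    using arg_cong[OF Askew, of "\<lambda>M. M $ i $ j"] by (simp add: transpose_def)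
  have "A = 0"
    by (rule skew_quad_zero[OF skewe dist _ s2]) (use pos in \<open>auto intro: add_pos_pos\<close>)
  then show ?thesis using DA by simp
qed

end

lemma mv_sum: "(sum f I) *v (v::real^'n) = sum (\<lambda>i. f i *v v) I" for f :: "'i \<Rightarrow> real^'n^'m"
  by (induct I rule: infinite_finite_induct) (simp_all add: matrix_vector_mult_add_rdistrib)
lemma mv_scaleR: "(c *\<^sub>R M) *v (v::real^'n) = c *\<^sub>R (M *v v)" for M :: "real^'n^'m"
  by (simp add: matrix_vector_mult_def vec_eq_iff sum_distrib_left mult.assoc)
lemma col_mult: "M *v column j N = column j (M ** N)" for M :: "real^'n^'m" and N :: "real^'p^'n"
  by (simp add: matrix_vector_mult_def matrix_matrix_mult_def column_def vec_eq_iff)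

lemma tangent_diff: "T \<in> tangent B \<Longrightarrow> T' \<in> tangent B \<Longrightarrow> T - T' \<in> tangent B"
  unfolding tangent_def by (simp add: matrix_diff_ldistrib transpose_diff matrix_diff_rdistrib)

context setting begin

lemma ehess_eq: "ehess (fS (Gam B lam) lam) B Dl X = Yf Dl \<bullet> X"
proof -
  have e: "egrad (fS (Gam B lam) lam) = gradS (Gam B lam) lam"
    by (rule egrad_fS[OF lam0 Gam_sym])
  have "frechet_derivative (gradS (Gam B lam) lam) (at B) = (\<lambda>h. matrix_inv (Gam B lam) ** dGam B lam h ** matrix_inv (Gam B lam) ** B ** diag_mat lam)"
    by (rule frechet_derivative_at[OF gradS_deriv[OF lam0], symmetric])
  then show ?thesis by (simp add: ehess_def e Yf_def Ninv L_def)
qed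

lemma egrad0: "egrad (fS (Gam B lam) lam) B = 0"
proof -
  have e: "egrad (fS (Gam B lam) lam) = gradS (Gam B lam) lam"
    by (rule egrad_fS[OF lam0 Gam_sym])
  have i: "matrix_inv (Gam B lam) ** Gam B lam = mat 1" by (rule Gam_inv(2)[OF lam0])
  show ?thesis by (simp add: e gradS_def matrix_mul_assoc i)
qed

lemma ihess_eq: "ihess (fS (Gam B lam) lam) B Dl X = Yf Dl \<bullet> X"
  by (simp add: ihess_def egrad0 ehess_eq trace_def)

lemma igrad_eq: "igrad (fS S lam) B = Gr"
  by (simp add: igrad_def egrad_fS[OF lam0 Ssym] g_def Gr_def)

lemma main_loc: "ihess_inv (fS (Gam B lam) lam) B (igrad (fS S lam) B) = T0"
  unfolding ihess_inv_def igrad_eq ihess_eq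
proof (rule the_equality)
  show "T0 \<in> tangent B \<and> (\<forall>X\<in>tangent B. Yf T0 \<bullet> X = canon B Gr X)"
    using T0_tangent exist by blast
next
  fix T assume T: "T \<in> tangent B \<and> (\<forall>X\<in>tangent B. Yf T \<bullet> X = canon B Gr X)"
  have "\<forall>X\<in>tangent B. Yf (T - T0) \<bullet> X = 0"
    using T exist by (simp add: Yf_diff inner_diff_left)
  then have "T - T0 = 0" using uniq tangent_diff[OF conjunct1[OF T] T0_tangent] by blast
  then show "T = T0" by simp
qed

lemma rhs_eq: "(\<chi> a j. (Rmat B lam j *v (S *v column j B)) $ a) = T0"
proof (subst vec_eq_iff, intro allI, subst vec_eq_iff, intro allI)
  fix a j
  have v: "S *v column j B = column j (S ** B)" by (rule col_mult)
  have Pv: "P *v column j (S ** B) = column j (P ** S ** B)" by (simp add: col_mult matrix_mul_assoc)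
  have W2: "W = transpose B ** (S ** B)" by (simp add: W_def matrix_mul_assoc)
  have Wij: "W $ i $ j = (\<Sum>b\<in>UNIV. B $ b $ i * (S ** B) $ b $ j)" for i
    unfolding W2 matrix_matrix_mult_def[of "transpose B" "S ** B"] by (simp add: transpose_def)
  have R: "(Rmat B lam j *v (S *v column j B)) $ a
     = (\<Sum>i\<in>UNIV - {j}. (1 / (lam $ i - lam $ j)) * (\<Sum>b\<in>UNIV. B $ a $ i * B $ b $ i * (S ** B) $ b $ j))
       - (1 / lam $ j) * (P ** S ** B) $ a $ j"
    unfolding Rmat_def P_def[symmetric] v
    by (simp add: matrix_vector_mult_diff_rdistrib mv_sum mv_scaleR Pv sum_component)
      (simp add: matrix_vector_mult_def column_def mult.assoc)
  have L1: "(B ** AT) $ a $ j = (\<Sum>i\<in>UNIV - {j}. B $ a $ i * (W $ i $ j / (lam $ i - lam $ j)))"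
  proof -
    have "(B ** AT) $ a $ j = (\<Sum>i\<in>UNIV. B $ a $ i * AT $ i $ j)" by (simp add: matrix_matrix_mult_def)
    also have "\<dots> = B $ a $ j * AT $ j $ j + (\<Sum>i\<in>UNIV - {j}. B $ a $ i * AT $ i $ j)"
      by (rule sum.remove) auto
    also have "\<dots> = (\<Sum>i\<in>UNIV - {j}. B $ a $ i * (W $ i $ j / (lam $ i - lam $ j)))"
      by (simp add: AT_def)
    finally show ?thesis .
  qed
  have L2: "(P ** S ** B ** Linv) $ a $ j = (P ** S ** B) $ a $ j * (1 / lam $ j)"
    by (simp add: Linv_def diag_right)
  have "T0 $ a $ j = (\<Sum>i\<in>UNIV - {j}. B $ a $ i * (W $ i $ j / (lam $ i - lam $ j))) - (P ** S ** B) $ a $ j * (1 / lam $ j)"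
    by (simp add: T0_def L1 L2)
  also have "\<dots> = (Rmat B lam j *v (S *v column j B)) $ a"
    unfolding R Wij by (simp add: sum_distrib_left sum_divide_distrib mult_ac)
  finally show "(\<chi> a j. (Rmat B lam j *v (S *v column j B)) $ a) $ a $ j = T0 $ a $ j" by simp
qed

end

theorem corollary3:
  fixes Bs :: "real^'r^'M" and lams :: "real^'r"
    and Phi :: "real^'m^'M" and Y :: "nat \<Rightarrow> real^'m" and n :: nat
  assumes "Phi ** transpose Phi = mat 1"
    and "n \<ge> 1"
    and "Bs \<in> stiefel"
    and "\<forall>i. lams $ i > 0"
    and "\<forall>i j. i \<noteq> j \<longrightarrow> lams $ i \<noteq> lams $ j"
  shows "ihess_inv (\<lambda>B. Lpop (Gam Bs lams) B lams) Bs
           (igrad (\<lambda>B. Ltilde (Stilde n Phi Y) B lams) Bs)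
         = (\<chi> a j. (Rmat Bs lams j *v (Stilde n Phi Y *v column j Bs)) $ a)"
proof -
  have Ssym: "transpose (Stilde n Phi Y) = Stilde n Phi Y"
    by (simp add: Stilde_def transpose_def vec_eq_iff sum_component mult.commute)
  interpret setting Bs lams "Stilde n Phi Y"
    using assms(3-5) Ssym by unfold_locales (simp_all add: stiefel_def)
  have f1: "(\<lambda>B. Lpop (Gam Bs lams) B lams) = fS (Gam Bs lams) lams"
    by (simp add: fun_eq_iff Lpop_def fS_def)
  have f2: "(\<lambda>B. Ltilde (Stilde n Phi Y) B lams) = fS (Stilde n Phi Y) lams"
    by (simp add: fun_eq_iff Ltilde_def fS_def)
  show ?thesis unfolding f1 f2 main_loc rhs_eq ..
qed


end
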